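(* Let $c<d$ be real numbers and suppose $\omega$ is nonnegative and nondecreasing on $(c,d]$. Let $K\ge1$ be an integer and $c_1,\dots,c_K\in\mathbb{R}$. For $\rho>0$ let $$E_\rho=\Big\{t\in(c,d]:\ \omega(t)^{K-1}\,\omega(d)\prod_{\ell=1}^K|t-c_\ell|\le\rho^K\Big\}.$$ Then $$\int_{E_\rho}\omega(t)\,dt\le C(K)\,\rho,$$ where $C(K)$ depends only on $K$. *)

theory Defs
  imports "HOL-Analysis.Analysis"
begin

end

theory Submission imports Defs begin

lemma exj: fixes r :: real assumes "0 < r" "r \<le> 1"
  shows "\<exists>j. (1/2)^(Suc j) < r \<and> r \<le> (1/2)^j"
proof -
  obtain n where n: "(1/2::real)^n < r" using real_arch_pow_inv[of r "1/2"] assms by auto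
  have "\<forall>n. (1/2::real)^n < r \<longrightarrow> (\<exists>j. (1/2)^(Suc j) < r \<and> r \<le> (1/2)^j)"
  proof
    fix n show "(1/2::real)^n < r \<longrightarrow> (\<exists>j. (1/2)^(Suc j) < r \<and> r \<le> (1/2)^j)"
    proof (induction n)
      case 0 then show ?case using assms by auto
    next
      case (Suc n) show ?case
      proof (cases "(1/2::real)^n < r")
        case True then show ?thesis using Suc by blast
      next
        case False then show ?thesis by (intro impI exI[of _ n]) auto
      qed
    qed
  qed
  then show ?thesis using n by blast
qed

lemma qpow: "(2 powr (real m / real (Suc m)) :: real) ^ Suc m = 2 ^ m"
proof -
  have "(2 powr (real m / real (Suc m)) :: real) ^ Suc m = 2 powr (real (Suc m) * (real m / real (Suc m)))"
    by (rule powr_power) simp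
  also have "\<dots> = 2 powr (real m)" by simp
  finally show ?thesis by (simp add: powr_realpow)
qed

lemma keyalg: fixes W \<rho> q :: real assumes "W > 0" "q ^ Suc m = 2 ^ m"
  shows "(W*(1/2)^(Suc j))^m * W * (2*\<rho>/W*q^(Suc j))^(Suc m) = 2^(Suc m) * \<rho>^(Suc m)"
proof -
  have "(q^(Suc j))^(Suc m) = (2^m)^(Suc j)"
    by (metis assms(2) mult.commute power_mult)
  also have "\<dots> = 2^(m * Suc j)" by (simp only: power_mult[symmetric] mult.commute)
  finally have h: "(q^(Suc j))^(Suc m) = 2^(m * Suc j)" .
  have "(W*(1/2)^(Suc j))^m * W * (2*\<rho>/W*q^(Suc j))^(Suc m)
     = (W^m * W / W^(Suc m)) * ((1/2)^(Suc j))^m * 2^(Suc m) * \<rho>^Suc m * (q^(Suc j))^(Suc m)"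
    by (simp only: power_mult_distrib power_divide) (simp add: field_simps)
  also have "\<dots> = ((1/2)^(Suc j))^m * 2^(Suc m) * \<rho>^Suc m * 2^(m * Suc j)"
    using assms(1) h by simp
  also have "\<dots> = 2^(Suc m) * \<rho>^Suc m * ((1/2)^(Suc j * m) * 2^(m * Suc j))"
    by (simp only: power_mult[symmetric] ac_simps)
  also have "(1/2::real)^(Suc j * m) * 2^(m * Suc j) = 1"
    by (simp add: mult.commute power_one_over)
  finally show ?thesis by simp
qed

theorem lemma2p2:
  fixes K :: nat
  assumes "K \<ge> 1"
  shows "\<exists>C::real. \<forall>(c::real) (d::real) (\<omega>::real \<Rightarrow> real) (cs::nat \<Rightarrow> real) (\<rho>::real).
           c < d \<longrightarrow>
           (\<forall>t\<in>{c<..d}. 0 \<le> \<omega> t) \<longrightarrow>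
           mono_on {c<..d} \<omega> \<longrightarrow>
           \<rho> > 0 \<longrightarrow>
           (\<integral>\<^sup>+ t \<in> {t \<in> {c<..d}. \<omega> t ^ (K - 1) * \<omega> d * (\<Prod>l=1..K. \<bar>t - cs l\<bar>) \<le> \<rho> ^ K}.
               ennreal (\<omega> t) \<partial>lborel) \<le> ennreal (C * \<rho>)"
proof -
  obtain m where Km: "K = Suc m" using assms by (cases K) auto
  define q :: real where "q = 2 powr (real m / real (Suc m))"
  have qK: "q ^ Suc m = 2 ^ m" unfolding q_def by (rule qpow)
  have q0: "q > 0" unfolding q_def by simp
  have q2: "q < 2" unfolding q_def
    using powr_less_mono[of "real m / real (Suc m)" 1 2] by simp
  define C where "C = real K * (4 * q) / (1 - q/2)"
  show ?thesis
  proof (intro exI[of _ C] allI impI)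
    fix c d :: real and \<omega> :: "real \<Rightarrow> real" and cs :: "nat \<Rightarrow> real" and \<rho> :: real
    assume cd: "c < d" and nn: "\<forall>t\<in>{c<..d}. 0 \<le> \<omega> t" and mo: "mono_on {c<..d} \<omega>" and rp: "\<rho> > 0"
    define W where "W = \<omega> d"
    define E where "E = {t \<in> {c<..d}. \<omega> t ^ (K - 1) * \<omega> d * (\<Prod>l=1..K. \<bar>t - cs l\<bar>) \<le> \<rho> ^ K}"
    have C0: "C \<ge> 0" unfolding C_def using q0 q2 by simp
    have le: "\<omega> t \<le> W" if "t \<in> {c<..d}" for t
      unfolding W_def using mo that cd by (auto intro: mono_onD)
    show "(\<integral>\<^sup>+ t \<in> E. ennreal (\<omega> t) \<partial>lborel) \<le> ennreal (C * \<rho>)"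
    proof (cases "W > 0")
      case False
      have "(\<integral>\<^sup>+ t \<in> E. ennreal (\<omega> t) \<partial>lborel) \<le> (\<integral>\<^sup>+ t. (0::ennreal) \<partial>(lborel::real measure))"
      proof (rule nn_integral_mono)
        fix t show "ennreal (\<omega> t) * indicator E t \<le> 0"
        proof (cases "t \<in> E")
          case True then have "t \<in> {c<..d}" unfolding E_def by auto
          then have "\<omega> t \<le> 0" using le False by force
          then show ?thesis by (simp add: ennreal_eq_0_iff)
        qed simp
      qed
      then show ?thesis by simp
    next
      case Wp: True
      define \<delta> where "\<delta> j = 2*\<rho>/W*q^(Suc j)" for j
      have \<delta>0: "\<delta> j \<ge> 0" for j unfolding \<delta>_def using Wp rp q0 by simp
      define f where "f j l t = ennreal (W*(1/2)^j) * indicator {cs l - \<delta> j .. cs l + \<delta> j} t" for j l t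
      have pw: "ennreal (\<omega> t) * indicator E t \<le> (\<Sum>j. \<Sum>l\<in>{1..K}. f j l t)" for t
      proof (cases "t \<in> E \<and> \<omega> t > 0")
        case False
        then consider "t \<notin> E" | "\<not> \<omega> t > 0" by blast
        then show ?thesis
        proof cases
          assume "t \<notin> E" then show ?thesis by simp
        next
          assume "\<not> \<omega> t > 0" then have "ennreal (\<omega> t) = 0" by (simp add: ennreal_neg)
          then show ?thesis by simp
        qed
      next
        case True
        then have tE: "t \<in> E" and wt: "\<omega> t > 0" by auto
        then have tI: "t \<in> {c<..d}" unfolding E_def by auto
        have r1: "\<omega> t / W \<le> 1" using le[OF tI] Wp by simp
        obtain j where j1: "(1/2)^(Suc j) < \<omega> t / W" and j2: "\<omega> t / W \<le> (1/2)^j"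
          using exj[OF _ r1] wt Wp by auto
        have a1: "W*(1/2)^(Suc j) < \<omega> t" using j1 Wp by (simp add: field_simps)
        have a2: "\<omega> t \<le> W*(1/2)^j" using j2 Wp by (simp add: field_simps)
        have "\<exists>l\<in>{1..K}. \<bar>t - cs l\<bar> \<le> \<delta> j"
        proof (rule ccontr)
          assume "\<not> ?thesis"
          then have gt: "\<forall>l\<in>{1..K}. \<delta> j < \<bar>t - cs l\<bar>" by auto
          have "(\<Prod>l=1..K. \<delta> j) \<le> (\<Prod>l=1..K. \<bar>t - cs l\<bar>)"
            by (rule prod_mono) (use gt \<delta>0 in force)
          then have P: "\<delta> j ^ Suc m \<le> (\<Prod>l=1..K. \<bar>t - cs l\<bar>)" using Km by simp
          have "(W*(1/2)^(Suc j))^m \<le> \<omega> t ^ m"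
            by (rule power_mono) (use a1 Wp in auto)
          have "(W*(1/2)^(Suc j))^m * W * \<delta> j ^ Suc m \<le> \<omega> t ^ m * W * (\<Prod>l=1..K. \<bar>t - cs l\<bar>)"
          proof (rule mult_mono)
            show "(W*(1/2)^(Suc j))^m * W \<le> \<omega> t ^ m * W"
              using \<open>(W*(1/2)^(Suc j))^m \<le> \<omega> t ^ m\<close> Wp by (intro mult_right_mono) simp_all
            show "\<delta> j ^ Suc m \<le> (\<Prod>l=1..K. \<bar>t - cs l\<bar>)" by (rule P)
            show "0 \<le> \<omega> t ^ m * W" using wt Wp by simp
            show "0 \<le> \<delta> j ^ Suc m" using \<delta>0 by simp
          qed
          also have "\<dots> \<le> \<rho> ^ Suc m" using tE Km unfolding E_def W_def by simp
          finally have "2^(Suc m) * \<rho>^(Suc m) \<le> \<rho> ^ Suc m"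
            using keyalg[OF Wp qK, of j \<rho>] unfolding \<delta>_def by simp
          moreover have "\<rho>^Suc m < 2^(Suc m) * \<rho>^(Suc m)"
          proof -
            have "(1::real) < 2^(Suc m)" by (rule one_less_power) auto
            moreover have "\<rho>^Suc m > 0" using rp by simp
            ultimately show ?thesis using mult_strict_right_mono[of 1 "2^Suc m" "\<rho>^Suc m"] by simp
          qed
          ultimately show False by simp
        qed
        then obtain l where l: "l \<in> {1..K}" "\<bar>t - cs l\<bar> \<le> \<delta> j" by auto
        have "ennreal (\<omega> t) * indicator E t = ennreal (\<omega> t)" using tE by simp
        also have "\<dots> \<le> f j l t" unfolding f_def using l a2 by (auto simp: abs_le_iff ennreal_leI)
        also have "\<dots> \<le> (\<Sum>l\<in>{1..K}. f j l t)" by (rule member_le_sum) (use l in auto)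
        also have "\<dots> \<le> (\<Sum>j. \<Sum>l\<in>{1..K}. f j l t)"
          using sum_le_suminf[of "\<lambda>j. \<Sum>l\<in>{1..K}. f j l t" "{j}"] by (simp add: summableI)
        finally show ?thesis .
      qed
      have fint: "(\<integral>\<^sup>+ t. f j l t \<partial>lborel) = ennreal (4*\<rho>*q*(q/2)^j)" for j l
      proof -
        have "(\<integral>\<^sup>+ t. f j l t \<partial>lborel) = ennreal (W*(1/2)^j) * ennreal (2 * \<delta> j)"
          unfolding f_def using \<delta>0[of j] by (subst nn_integral_cmult_indicator) auto
        also have "\<dots> = ennreal (W*(1/2)^j * (2 * \<delta> j))" using Wp \<delta>0[of j] by (simp add: ennreal_mult)
        also have "W*(1/2)^j * (2 * \<delta> j) = 4*\<rho>*q*(q/2)^j"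
          unfolding \<delta>_def using Wp by (simp add: field_simps power_divide)
        finally show ?thesis .
      qed
      have fm: "(\<lambda>t. f j l t) \<in> borel_measurable lborel" for j l unfolding f_def by simp
      have "(\<integral>\<^sup>+ t \<in> E. ennreal (\<omega> t) \<partial>lborel) \<le> (\<integral>\<^sup>+ t. (\<Sum>j. \<Sum>l\<in>{1..K}. f j l t) \<partial>lborel)"
        by (rule nn_integral_mono) (rule pw)
      also have "\<dots> = (\<Sum>j. \<integral>\<^sup>+ t. (\<Sum>l\<in>{1..K}. f j l t) \<partial>lborel)"
        by (rule nn_integral_suminf) (use fm in auto)
      also have "\<dots> = (\<Sum>j. \<Sum>l\<in>{1..K}. \<integral>\<^sup>+ t. f j l t \<partial>lborel)"
        by (subst nn_integral_sum) (use fm in auto)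
      also have "\<dots> = (\<Sum>j. ennreal (real K * (4*\<rho>*q*(q/2)^j)))"
      proof (rule suminf_cong)
        fix j
        have "(\<Sum>l\<in>{1..K}. \<integral>\<^sup>+ t. f j l t \<partial>lborel) = (\<Sum>l\<in>{1..K}. ennreal (4*\<rho>*q*(q/2)^j))"
          by (simp only: fint)
        also have "\<dots> = ennreal (\<Sum>l\<in>{1..K}. 4*\<rho>*q*(q/2)^j)"
          by (rule sum_ennreal) (use rp q0 in simp)
        finally show "(\<Sum>l\<in>{1..K}. \<integral>\<^sup>+ t. f j l t \<partial>lborel) = ennreal (real K * (4*\<rho>*q*(q/2)^j))"
          by simp
      qed
      also have "\<dots> = ennreal (real K * (4*\<rho>*q) * (1 / (1 - q/2)))"
      proof (rule suminf_ennreal_eq)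
        show "0 \<le> real K * (4*\<rho>*q*(q/2)^j)" for j using rp q0 by simp
        have "(\<lambda>j. (q/2)^j) sums (1 / (1 - q/2))" using q0 q2 by (intro geometric_sums) simp
        from sums_mult[OF this, of "real K * (4*\<rho>*q)"]
        show "(\<lambda>j. real K * (4*\<rho>*q*(q/2)^j)) sums (real K * (4*\<rho>*q) * (1 / (1 - q/2)))"
          by (simp add: ac_simps)
      qed
      also have "real K * (4*\<rho>*q) * (1 / (1 - q/2)) = C * \<rho>" unfolding C_def by simp
      finally show ?thesis unfolding E_def .
    qed
  qed
qed

end
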